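(* Let $p, q \in \mathbb{R}$ with $q \le p$. Then $$\frac{\mathscr{P}_p(v)}{\mathscr{P}_q(v)} \le \exp\bigg( \frac{p-q}{8} \Big(\ln\Big(\frac{\max v}{\min v}\Big)\Big)^2 \bigg)$$ for every $n \in \mathbb{N}$ and every $v \in \mathbb{R}_+^n$. Moreover, the constant $\frac{p-q}{8}$ is sharp: if $C \in \mathbb{R}$ is such that $\frac{\mathscr{P}_p(v)}{\mathscr{P}_q(v)} \le \exp\big( C (\ln(\max v/\min v))^2\big)$ holds for all $n\in\mathbb{N}$ and all $v \in \mathbb{R}_+^n$, then $C \ge \frac{p-q}{8}$.
   Context: For $v = (v_1,\dots,v_n) \in \mathbb{R}_+^n$ (vectors of positive reals), the power mean of order $p \in \mathbb{R}$ is $\mathscr{P}_p(v) = \big(\frac{v_1^p + \cdots + v_n^p}{n}\big)^{1/p}$ for $p \neq 0$ and $\mathscr{P}_0(v) = \sqrt[n]{v_1 \cdots v_n}$. Here $\max v$ and $\min v$ denote the largest and smallest entry of $v$. *)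

theory Defs
  imports "HOL-Analysis.Analysis"
begin

text \<open>Vectors in R_+^n are represented as functions v :: nat => real restricted
  to the index set {..<n}, with n >= 1.\<close>

definition power_mean :: "real \<Rightarrow> nat \<Rightarrow> (nat \<Rightarrow> real) \<Rightarrow> real" where
  "power_mean p n v =
     (if p = 0 then (\<Prod>i<n. v i) powr (1 / real n)
      else ((\<Sum>i<n. v i powr p) / real n) powr (1 / p))"

definition vmax :: "nat \<Rightarrow> (nat \<Rightarrow> real) \<Rightarrow> real" where
  "vmax n v = Max (v ` {..<n})"

definition vmin :: "nat \<Rightarrow> (nat \<Rightarrow> real) \<Rightarrow> real" where
  "vmin n v = Min (v ` {..<n})"

end

theory Submission
  imports Defs "HOL-Probability.Hoeffding" "HOL-Real_Asymp.Real_Asymp"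
begin


lemma hoeff_pos:
  fixes w x :: "nat \<Rightarrow> real"
  assumes fin: "finite I" and w: "\<forall>i\<in>I. w i \<ge> 0" and s: "(\<Sum>i\<in>I. w i) = 1"
    and x: "\<forall>i\<in>I. a \<le> x i \<and> x i \<le> b" and ab: "a < b" and l: "l > 0"
  shows "(\<Sum>i\<in>I. w i * exp (l * x i)) \<le> exp (l * (\<Sum>i\<in>I. w i * x i) + l^2 * (b-a)^2/8)"
proof -
  define \<mu> where "\<mu> = (\<Sum>i\<in>I. w i * x i)"
  have "\<mu> - a = (\<Sum>i\<in>I. w i * (x i - a))"
    using s by (simp add: \<mu>_def right_diff_distrib sum_subtractf sum_distrib_right[symmetric])
  also have "\<dots> \<ge> 0" using w x by (intro sum_nonneg) auto
  finally have ma: "a \<le> \<mu>" by simp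
  have "b - \<mu> = (\<Sum>i\<in>I. w i * (b - x i))"
    using s by (simp add: \<mu>_def right_diff_distrib sum_subtractf sum_distrib_right[symmetric])
  also have "\<dots> \<ge> 0" using w x by (intro sum_nonneg) auto
  finally have mb: "\<mu> \<le> b" by simp
  have conv: "exp (l * x i) \<le> (b - x i) / (b - a) * exp (l*a) + (x i - a)/(b-a) * exp (l*b)"
    if i: "i \<in> I" for i
  proof -
    define y where "y = (b - x i) / (b-a)"
    have y: "y \<in> {0..1}"
      using x i ab by (auto simp: y_def)
    have "exp (l * ((1 - y) *\<^sub>R b + y *\<^sub>R a)) \<le> (1 - y) * exp (l * b) + y * exp (l * a)"
      using y l by (intro convex_onD[OF convex_on_exp]) auto
    also have "(1 - y) *\<^sub>R b + y *\<^sub>R a = x i"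
      using ab by (simp add: y_def divide_simps) (simp add: algebra_simps)?
    also have "1 - y = (x i - a) / (b - a)"
      using ab by (simp add: field_simps y_def)
    finally show ?thesis
      by (simp add: y_def)
  qed
  have "(\<Sum>i\<in>I. w i * exp (l * x i)) \<le> (\<Sum>i\<in>I. w i * ((b - x i) / (b - a) * exp (l*a) + (x i - a)/(b-a) * exp (l*b)))"
    using conv w by (intro sum_mono mult_left_mono) auto
  also have "\<dots> = ((b - \<mu>) * exp (l*a) + (\<mu> - a) * exp (l*b)) / (b - a)"
  proof -
    have "(\<Sum>i\<in>I. w i * ((b - x i) / (b - a) * exp (l*a) + (x i - a)/(b-a) * exp (l*b)))
        = (\<Sum>i\<in>I. w i * (b - x i)) * exp (l*a) / (b-a) + (\<Sum>i\<in>I. w i * (x i - a)) * exp (l*b) / (b-a)"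
    proof -
      have "\<And>i. w i * ((b - x i) / (b - a) * exp (l*a) + (x i - a)/(b-a) * exp (l*b))
           = (w i * (b - x i)) * (exp (l*a) / (b-a)) + (w i * (x i - a)) * (exp (l*b) / (b-a))"
        by (simp add: field_simps)
      hence "(\<Sum>i\<in>I. w i * ((b - x i) / (b - a) * exp (l*a) + (x i - a)/(b-a) * exp (l*b)))
           = (\<Sum>i\<in>I. (w i * (b - x i)) * (exp (l*a) / (b-a)) + (w i * (x i - a)) * (exp (l*b) / (b-a)))"
        by simp
      also have "\<dots> = (\<Sum>i\<in>I. w i * (b - x i)) * (exp (l*a) / (b-a)) + (\<Sum>i\<in>I. w i * (x i - a)) * (exp (l*b) / (b-a))"
        by (simp only: sum.distrib sum_distrib_right)
      finally show ?thesis by simp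
    qed
    also have "(\<Sum>i\<in>I. w i * (b - x i)) = b - \<mu>"
      using s by (simp add: \<mu>_def right_diff_distrib sum_subtractf sum_distrib_right[symmetric])
    also have "(\<Sum>i\<in>I. w i * (x i - a)) = \<mu> - a"
      using s by (simp add: \<mu>_def right_diff_distrib sum_subtractf sum_distrib_right[symmetric])
    finally show ?thesis by (simp add: add_divide_distrib)
  qed
  also have "\<dots> = exp (l*a) * (1 + ((\<mu> - a)/(b-a)) * (exp (l*(b-a)) - 1))"
  proof -
    have e: "exp (l*(b-a)) = exp (l*b) / exp (l*a)" by (simp add: right_diff_distrib exp_diff)
    have "b - a \<noteq> 0" using ab by simp
    then show ?thesis unfolding e by (simp add: field_simps)
  qed
  also have "\<dots> \<le> exp (l*a) * exp (l*(b-a) * ((\<mu> - a)/(b-a)) + (l*(b-a))^2/8)"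
  proof -
    define pp where "pp = (\<mu> - a)/(b-a)"
    define h where "h = l*(b-a)"
    have pp: "pp \<ge> 0" using ma ab by (simp add: pp_def)
    have h: "h \<ge> 0" using l ab by (simp add: h_def)
    have pos: "1 + pp * (exp h - 1) > 0"
      using pp h by (intro add_pos_nonneg mult_nonneg_nonneg) auto
    have "-h * pp + ln (1 + pp * (exp h - 1)) \<le> h^2/8"
      using Hoeffdings_lemma_aux[OF h pp] by simp
    hence "ln (1 + pp * (exp h - 1)) \<le> h * pp + h^2/8" by simp
    hence "1 + pp * (exp h - 1) \<le> exp (h * pp + h^2/8)"
      using pos by (metis exp_le_cancel_iff exp_ln)
    thus ?thesis unfolding pp_def h_def by (intro mult_left_mono) auto
  qed
  also have "\<dots> = exp (l * \<mu> + l^2 * (b-a)^2/8)"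
  proof -
    have 1: "l*(b-a)*((\<mu>-a)/(b-a)) = l*(\<mu> - a)" using ab by simp
    have 2: "(l*(b-a))^2 = l^2*(b-a)^2" by (simp add: power_mult_distrib)
    show ?thesis unfolding 1 2 exp_add[symmetric] by (simp add: algebra_simps)
  qed
  finally show ?thesis by (simp add: \<mu>_def)
qed

lemma hoeff:
  fixes w x :: "nat \<Rightarrow> real"
  assumes fin: "finite I" and w: "\<forall>i\<in>I. w i \<ge> 0" and s: "(\<Sum>i\<in>I. w i) = 1"
    and x: "\<forall>i\<in>I. a \<le> x i \<and> x i \<le> b"
  shows "(\<Sum>i\<in>I. w i * exp (l * x i)) \<le> exp (l * (\<Sum>i\<in>I. w i * x i) + l^2 * (b-a)^2/8)"
proof -
  have "I \<noteq> {}" using s by auto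
  then obtain i0 where "i0 \<in> I" by auto
  hence ab: "a \<le> b" using x by force
  consider "a = b" | "a < b \<and> l = 0" | "a < b \<and> l > 0" | "a < b \<and> l < 0"
    using ab by fastforce
  then show ?thesis
  proof cases
    case 1
    hence xa: "\<forall>i\<in>I. x i = a" using x by force
    have "(\<Sum>i\<in>I. w i * exp (l * x i)) = (\<Sum>i\<in>I. w i) * exp (l * a)"
      using xa by (simp add: sum_distrib_right)
    moreover have "(\<Sum>i\<in>I. w i * x i) = (\<Sum>i\<in>I. w i) * a"
      using xa by (simp add: sum_distrib_right)
    ultimately show ?thesis using s 1 by simp
  next
    case 2 thus ?thesis using s by simp
  next
    case 3 thus ?thesis using hoeff_pos[OF fin w s x] by blast
  next
    case 4
    have "(\<Sum>i\<in>I. w i * exp ((-l) * (- x i))) \<le> exp ((-l) * (\<Sum>i\<in>I. w i * (- x i)) + (-l)^2 * ((-a)-(-b))^2/8)"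
      using 4 x by (intro hoeff_pos[OF fin w s]) auto
    also have "(\<Sum>i\<in>I. w i * (- x i)) = - (\<Sum>i\<in>I. w i * x i)"
      by (simp add: sum_negf[symmetric])
    also have "((-a)-(-b))^2 = (b-a)^2" by (simp add: power2_commute)
    finally show ?thesis by simp
  qed
qed

lemma ln_le_exp: "0 < (X::real) \<Longrightarrow> X \<le> exp Y \<Longrightarrow> ln X \<le> Y"
  by (metis exp_gt_zero ln_exp ln_le_cancel_iff)

definition Gf :: "nat \<Rightarrow> (nat \<Rightarrow> real) \<Rightarrow> real \<Rightarrow> real" where
  "Gf n x t = (if t = 0 then (\<Sum>i<n. x i) / n else ln ((\<Sum>i<n. exp (t * x i)) / n) / t)"

lemma pm_exp:
  assumes "n \<ge> 1" "\<forall>i<n. v i > 0"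
  shows "power_mean t n v = exp (Gf n (\<lambda>i. ln (v i)) t)"
proof (cases "t = 0")
  case True
  have "(\<Prod>i<n. v i) > 0" using assms by (intro prod_pos) auto
  hence ne: "(\<Prod>i<n. v i) \<noteq> 0" by (metis less_irrefl)
  have "(\<Prod>i<n. v i) powr (1 / real n) = exp (ln (\<Prod>i<n. v i) / n)"
    by (simp only: powr_def ne if_False) simp
  also have "ln (\<Prod>i<n. v i) = (\<Sum>i<n. ln (v i))"
  proof -
    have "\<forall>i\<in>{..<n}. v i \<noteq> 0" using assms by force
    thus ?thesis by (intro ln_prod) auto
  qed
  finally show ?thesis using True by (simp add: power_mean_def Gf_def)
next
  case False
  have e: "(\<Sum>i<n. v i powr t) = (\<Sum>i<n. exp (t * ln (v i)))"
    using assms by (intro sum.cong) (auto simp: powr_def mult.commute)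
  have "(\<Sum>i<n. exp (t * ln (v i))) / n > 0"
    using assms by (intro divide_pos_pos sum_pos) (auto simp: lessThan_empty_iff)
  hence ne: "(\<Sum>i<n. exp (t * ln (v i))) / n \<noteq> 0" by (metis less_irrefl)
  show ?thesis using False unfolding power_mean_def Gf_def e
    by (simp only: powr_def ne if_False if_True) simp
qed

lemma F_mono:
  fixes x :: "nat \<Rightarrow> real"
  assumes n: "n \<ge> 1" and x: "\<forall>i<n. a \<le> x i \<and> x i \<le> b" and qp: "q \<le> p"
  shows "Gf n x p - p*(b-a)^2/8 \<le> Gf n x q - q*(b-a)^2/8"
proof -
  define L where "L = (b-a)^2"
  define S0 where "S0 = (\<lambda>t. \<Sum>i<n. exp (t * x i))"
  define S1 where "S1 = (\<lambda>t. \<Sum>i<n. x i * exp (t * x i))"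
  define \<phi> where "\<phi> = (\<lambda>t. ln (S0 t / n))"
  define \<mu> where "\<mu> = (\<Sum>i<n. x i) / n"
  have nz: "real n > 0" using n by simp
  have S0pos: "S0 t > 0" for t unfolding S0_def using n by (intro sum_pos) (auto simp: lessThan_empty_iff)
  have key1: "\<phi> t \<le> t * \<mu> + t^2 * L / 8" for t
  proof -
    have "(\<Sum>i<n. (1/n) * exp (t * x i)) \<le> exp (t * (\<Sum>i<n. (1/n) * x i) + t^2 * (b-a)^2/8)"
      using x nz by (intro hoeff) auto
    also have "(\<Sum>i<n. (1/n) * exp (t * x i)) = S0 t / n"
      by (simp add: S0_def sum_divide_distrib)
    also have "(\<Sum>i<n. (1/n) * x i) = \<mu>"
      by (simp add: \<mu>_def sum_divide_distrib)
    finally have "S0 t / n \<le> exp (t * \<mu> + t^2 * L/8)" by (simp add: L_def)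
    hence "ln (S0 t / n) \<le> t * \<mu> + t^2 * L/8"
      using S0pos nz by (intro ln_le_exp) auto
    thus ?thesis by (simp add: \<phi>_def)
  qed
  have key2: "t * (S1 t / S0 t) - \<phi> t \<le> t^2 * L / 8" for t
  proof -
    define w where "w = (\<lambda>i. exp (t * x i) / S0 t)"
    have ws: "(\<Sum>i<n. w i) = 1"
      using S0pos[of t] by (simp add: w_def sum_divide_distrib[symmetric] S0_def)
    have "(\<Sum>i<n. w i * exp ((-t) * x i)) \<le> exp ((-t) * (\<Sum>i<n. w i * x i) + (-t)^2 * (b-a)^2/8)"
      using x S0pos[of t] ws by (intro hoeff) (auto simp: w_def)
    also have "(\<Sum>i<n. w i * exp ((-t) * x i)) = n / S0 t"
    proof -
      have "w i * exp ((-t) * x i) = 1 / S0 t" for i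
      proof -
        have "exp (t * x i) * exp ((-t) * x i) = 1" by (simp flip: exp_add)
        thus ?thesis by (simp add: w_def)
      qed
      thus ?thesis by simp
    qed
    also have "(\<Sum>i<n. w i * x i) = S1 t / S0 t"
      by (simp add: w_def S1_def sum_divide_distrib mult.commute)
    finally have "n / S0 t \<le> exp (- t * (S1 t / S0 t) + t^2 * L/8)" by (simp add: L_def)
    hence "ln (n / S0 t) \<le> - t * (S1 t / S0 t) + t^2 * L/8"
      using S0pos nz by (intro ln_le_exp) auto
    moreover have "ln (n / S0 t) = - \<phi> t"
      using S0pos[of t] nz by (simp add: \<phi>_def ln_div)
    ultimately show ?thesis by simp
  qed
  define Fn where "Fn = (\<lambda>t. \<phi> t / t - t * (L / 8))"
  have G: "Gf n x t = (if t = 0 then \<mu> else \<phi> t / t)" for t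
    by (simp add: Gf_def \<mu>_def \<phi>_def S0_def)
  have deriv: "(Fn has_real_derivative ((S1 t / S0 t * t - \<phi> t) / t^2 - L/8)) (at t)"
    if "t \<noteq> 0" for t
  proof -
    have "(S0 has_real_derivative (\<Sum>i<n. exp (t * x i) * (1 * x i))) (at t)"
      unfolding S0_def
      by (intro DERIV_sum) (auto intro!: derivative_eq_intros)
    hence d0: "(S0 has_real_derivative S1 t) (at t)"
      by (rule DERIV_cong) (simp add: S1_def mult.commute)
    have dd: "((\<lambda>t. S0 t / n) has_real_derivative (S1 t * real n - S0 t * 0) / (real n * real n)) (at t)"
      using nz by (intro DERIV_divide d0 DERIV_const) auto
    have "(\<phi> has_real_derivative (1 / (S0 t / n)) * ((S1 t * real n - S0 t * 0) / (real n * real n))) (at t)"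
      unfolding \<phi>_def using S0pos[of t] nz
      by (intro DERIV_chain2[OF DERIV_ln_divide dd]) auto
    hence d: "(\<phi> has_real_derivative S1 t / S0 t) (at t)"
      by (rule DERIV_cong) (use nz S0pos[of t] in \<open>simp add: field_simps\<close>)
    have "(Fn has_real_derivative ((S1 t / S0 t) * t - \<phi> t * 1) / (t * t) - 1 * (L/8)) (at t)"
      unfolding Fn_def using that
      by (intro DERIV_diff DERIV_divide d DERIV_ident DERIV_cmult_right) auto
    thus ?thesis
      by (rule DERIV_cong) (simp add: power2_eq_square)
  qed
  have dneg: "(S1 t / S0 t * t - \<phi> t) / t^2 - L/8 \<le> 0" if "t \<noteq> 0" for t
  proof -
    have "S1 t / S0 t * t - \<phi> t \<le> t^2 * L / 8" using key2[of t] by (simp add: mult.commute)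
    hence "(S1 t / S0 t * t - \<phi> t) / t^2 \<le> L / 8" using that
      by (simp add: divide_le_eq mult.commute)
    thus ?thesis by simp
  qed
  have mono: "Fn p' \<le> Fn q'" if "q' \<le> p'" "0 \<notin> {q'..p'}" for p' q'
  proof (rule DERIV_nonpos_imp_nonincreasing[of q' p' Fn])
    show "q' \<le> p'" by fact
    fix y assume "q' \<le> y" "y \<le> p'"
    hence "y \<noteq> 0" using that by auto
    thus "\<exists>D. (Fn has_real_derivative D) (at y) \<and> D \<le> 0" using deriv dneg by blast
  qed
  show ?thesis
  proof (cases "q = p")
    case True thus ?thesis by simp
  next
    case False
    hence qp': "q < p" using qp by simp
    have F0p: "\<phi> p / p - p * L/8 \<le> \<mu>" if "p > 0"
    proof -
      have "\<phi> p \<le> p * (\<mu> + p * L/8)" using key1[of p] by (simp add: power2_eq_square algebra_simps)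
      thus ?thesis using that by (simp add: divide_le_eq algebra_simps)
    qed
    have F0q: "\<mu> \<le> \<phi> q / q - q * L/8" if "q < 0"
    proof -
      have "\<phi> q \<le> q * (\<mu> + q * L/8)" using key1[of q] by (simp add: power2_eq_square algebra_simps)
      thus ?thesis using that by (simp add: le_divide_eq algebra_simps)
    qed
    consider "0 < q" | "p < 0" | "q \<le> 0 \<and> 0 \<le> p" by linarith
    thus ?thesis
    proof cases
      case 1 thus ?thesis using mono[of q p] qp unfolding G Fn_def L_def by auto
    next
      case 2 thus ?thesis using mono[of q p] qp unfolding G Fn_def L_def by auto
    next
      case 3
      have a: "Gf n x p - p*L/8 \<le> \<mu>"
        using F0p 3 unfolding G by (cases "p = 0") auto
      have b: "\<mu> \<le> Gf n x q - q*L/8"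
        using F0q 3 qp' unfolding G by (cases "q = 0") auto
      show ?thesis using a b by (simp add: L_def)
    qed
  qed
qed

lemma part1:
  fixes p q :: real
  assumes qp: "q \<le> p" and n: "n \<ge> 1" and v: "\<forall>i<n. v i > 0"
  shows "power_mean p n v / power_mean q n v \<le> exp ((p - q) / 8 * (ln (vmax n v / vmin n v))^2)"
proof -
  define x where "x = (\<lambda>i. ln (v i))"
  have fin: "finite (v ` {..<n})" by simp
  have ne: "v ` {..<n} \<noteq> {}" using n by (auto simp: lessThan_empty_iff)
  have mn: "vmin n v \<in> v ` {..<n}" unfolding vmin_def using Min_in[OF fin ne] .
  have mx: "vmax n v \<in> v ` {..<n}" unfolding vmax_def using Max_in[OF fin ne] .
  have mnpos: "vmin n v > 0" using mn v by auto
  have mxpos: "vmax n v > 0" using mx v by auto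
  have bnd: "ln (vmin n v) \<le> x i \<and> x i \<le> ln (vmax n v)" if "i < n" for i
  proof -
    have "vmin n v \<le> v i" unfolding vmin_def using fin that by (intro Min_le) auto
    moreover have "v i \<le> vmax n v" unfolding vmax_def using fin that by (intro Max_ge) auto
    ultimately show ?thesis using v that mnpos unfolding x_def by auto
  qed
  have lr: "ln (vmax n v / vmin n v) = ln (vmax n v) - ln (vmin n v)"
    using mnpos mxpos by (simp add: ln_div)
  have F: "Gf n x p - p*(ln (vmax n v) - ln (vmin n v))^2/8 \<le> Gf n x q - q*(ln (vmax n v) - ln (vmin n v))^2/8"
    using F_mono[OF n _ qp] bnd by blast
  have "power_mean p n v / power_mean q n v = exp (Gf n x p - Gf n x q)"
    using pm_exp[OF n v] unfolding x_def by (simp add: exp_diff)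
  also have "\<dots> \<le> exp ((p - q) / 8 * (ln (vmax n v / vmin n v))^2)"
    unfolding lr using F by (simp add: algebra_simps)
  finally show ?thesis .
qed

lemma klim: "((\<lambda>y::real. (ln ((1 + exp y) / 2) - y / 2) / y^2) \<longlongrightarrow> 1/8) (at 0)"
  by real_asymp

lemma part2:
  fixes p q C :: real
  assumes H: "\<forall>n::nat. \<forall>v::nat \<Rightarrow> real. n \<ge> 1 \<longrightarrow> (\<forall>i<n. v i > 0) \<longrightarrow>
            power_mean p n v / power_mean q n v
              \<le> exp (C * (ln (vmax n v / vmin n v))^2)"
  shows "C \<ge> (p - q) / 8"
proof -
  define k where "k = (\<lambda>y::real. ln ((1 + exp y) / 2) - y / 2)"
  define K where "K = (\<lambda>(t::real) (s::real). if t = 0 then 0 else k (t * s) / t)"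
  have Klim: "((\<lambda>s. K t s / s^2) \<longlongrightarrow> t/8) (at_right 0)" for t
  proof (cases "t = 0")
    case True then show ?thesis by (simp add: K_def)
  next
    case False
    have f: "filterlim (\<lambda>s. t * s) (at 0) (at_right 0)"
    proof (rule filterlim_atI)
      show "((\<lambda>s. t * s) \<longlongrightarrow> 0) (at_right 0)"
        by (rule tendsto_eq_intros refl | simp)+
      show "\<forall>\<^sub>F s in at_right 0. t * s \<noteq> 0"
        using eventually_at_right_less[of "0::real"] by (rule eventually_mono) (use False in simp)
    qed
    have "((\<lambda>s. k (t * s) / (t * s)^2) \<longlongrightarrow> 1/8) (at_right 0)"
      using filterlim_compose[OF klim f] unfolding k_def .
    hence "((\<lambda>s. t * (k (t * s) / (t * s)^2)) \<longlongrightarrow> t * (1/8)) (at_right 0)"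
      by (intro tendsto_mult_left)
    hence "((\<lambda>s. t * (k (t * s) / (t * s)^2)) \<longlongrightarrow> t/8) (at_right 0)" by simp
    moreover have "\<forall>\<^sub>F s in at_right 0. t * (k (t * s) / (t * s)^2) = K t s / s^2"
      using eventually_at_right_less[of "0::real"]
    proof (rule eventually_mono)
      fix s :: real assume "0 < s"
      thus "t * (k (t * s) / (t * s)^2) = K t s / s^2"
        using False by (simp add: K_def field_simps power2_eq_square)
    qed
    ultimately show ?thesis by (rule Lim_transform_eventually)
  qed
  have ineq: "K p s - K q s \<le> C * s^2" if s: "s > 0" for s
  proof -
    define v where "v = (\<lambda>i::nat. if i = 0 then 1 else exp s)"
    have pos: "\<forall>i<2. v i > 0" by (simp add: v_def)
    have l2: "{..<(2::nat)} = {0, 1}" by auto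
    have img: "v ` {..<2} = {1, exp s}" unfolding l2 by (auto simp: v_def)
    have mx: "vmax 2 v = exp s" unfolding vmax_def img using s by simp
    have mn: "vmin 2 v = 1" unfolding vmin_def img using s by simp
    have G: "Gf 2 (\<lambda>i. ln (v i)) t = s/2 + K t s" for t
    proof (cases "t = 0")
      case True thus ?thesis by (simp add: Gf_def K_def l2 v_def)
    next
      case False
      have "Gf 2 (\<lambda>i. ln (v i)) t = ln ((1 + exp (t * s)) / 2) / t"
        using False by (simp add: Gf_def l2 v_def)
      also have "\<dots> = s/2 + K t s" using False by (simp add: K_def k_def field_simps)
      finally show ?thesis .
    qed
    have "power_mean p 2 v / power_mean q 2 v \<le> exp (C * (ln (vmax 2 v / vmin 2 v))^2)"
      using H pos by auto
    also have "power_mean p 2 v / power_mean q 2 v = exp (K p s - K q s)"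
      using pm_exp[of 2 v] pos by (simp add: G exp_diff[symmetric])
    also have "ln (vmax 2 v / vmin 2 v) = s" by (simp add: mx mn)
    finally show ?thesis by simp
  qed
  have "((\<lambda>s. K p s / s^2 - K q s / s^2) \<longlongrightarrow> p/8 - q/8) (at_right 0)"
    using Klim by (intro tendsto_diff)
  moreover have "\<forall>\<^sub>F s in at_right 0. K p s / s^2 - K q s / s^2 \<le> C"
    using eventually_at_right_less[of "0::real"]
  proof (rule eventually_mono)
    fix s :: real assume "0 < s"
    hence "K p s - K q s \<le> C * s^2" by (rule ineq)
    thus "K p s / s^2 - K q s / s^2 \<le> C" using \<open>0 < s\<close>
      by (simp add: diff_divide_distrib[symmetric] divide_le_eq)
  qed
  ultimately have "p/8 - q/8 \<le> C"
    by (intro tendsto_le[OF trivial_limit_at_right_real tendsto_const])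
  thus ?thesis by simp
qed


theorem mainTheorem4:
  fixes p q :: real
  assumes "q \<le> p"
  shows "(\<forall>n::nat. \<forall>v::nat \<Rightarrow> real. n \<ge> 1 \<longrightarrow> (\<forall>i<n. v i > 0) \<longrightarrow>
            power_mean p n v / power_mean q n v
              \<le> exp ((p - q) / 8 * (ln (vmax n v / vmin n v))^2))
       \<and> (\<forall>C::real. (\<forall>n::nat. \<forall>v::nat \<Rightarrow> real. n \<ge> 1 \<longrightarrow> (\<forall>i<n. v i > 0) \<longrightarrow>
            power_mean p n v / power_mean q n v
              \<le> exp (C * (ln (vmax n v / vmin n v))^2))
          \<longrightarrow> C \<ge> (p - q) / 8)"
  using part1[OF assms] part2 by blast

end
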